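(* For all ordered graphs $G$ and $H$ there exists an integer $N_{G,H}$ such that $r_o(G,H)=r_o(G,H;N_{G,H})$.
   Context: An ordered graph $G$ on $n$ vertices has vertex set $[n]=\{1,\dots,n\}$ with the natural linear order. An ordered graph $G$ on $[n]$ is contained in an ordered graph $H$ on a linearly ordered vertex set if there is an injective map $f$ from $[n]$ to $V(H)$ with $f(i)<f(j)$ whenever $i<j$ and $f(i)f(j)\in E(H)$ whenever $ij\in E(G)$; such an image is an ordered copy of $G$. The ordered Ramsey number $r_<(G,H)$ is the least $N$ such that every red/blue coloring of the edges of the complete graph on $[N]$ contains an ordered red copy of $G$ or an ordered blue copy of $H$. The online ordered Ramsey game for $(G_1,G_2)$ is played by Builder and Painter on a linearly ordered vertex set. On each turn Builder selects a previously unselected pair of vertices (an edge) and Painter then colors it red or blue. Builder wins as soon as the colored edges contain an ordered red copy of $G_1$ or an ordered blue copy of $G_2$; Builder tries to minimize and Painter tries to maximize the number of turns. The online ordered Ramsey number $r_o(G_1,G_2)$ is the number of turns after which Builder wins under optimal play when the game is played on $\mathbb N$. For $N\ge r_<(G_1,G_2)$, the restricted number $r_o(G_1,G_2;N)$ is the number of turns after which Builder wins under optimal play when the game is played on the vertex set $[N]$. *)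

theory Defs
  imports Main
begin

text \<open>An ordered graph on [n] = {1..n}: a pair (n, E) where E is a set of pairs (i,j)
  with 1 \<le> i < j \<le> n (the edge ij of G, written with its smaller endpoint first).\<close>
type_synonym ograph = "nat \<times> (nat \<times> nat) set"

definition ograph :: "ograph \<Rightarrow> bool" where
  "ograph G \<longleftrightarrow> (\<forall>(i,j)\<in>snd G. 1 \<le> i \<and> i < j \<and> j \<le> fst G)"

text \<open>A partial red/blue colouring of pairs of natural numbers: c (u,v) for u < v is
  None (uncoloured), Some True (red) or Some False (blue).\<close>
type_synonym colouring = "nat \<times> nat \<Rightarrow> bool option"

definition has_copy :: "nat set \<Rightarrow> colouring \<Rightarrow> bool \<Rightarrow> ograph \<Rightarrow> bool" where
  "has_copy V c b G \<longleftrightarrow>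
     (\<exists>f. strict_mono_on {1..fst G} f \<and> f ` {1..fst G} \<subseteq> V \<and>
          (\<forall>(i,j)\<in>snd G. c (f i, f j) = Some b))"

definition builder_won :: "nat set \<Rightarrow> ograph \<Rightarrow> ograph \<Rightarrow> colouring \<Rightarrow> bool" where
  "builder_won V G1 G2 c \<longleftrightarrow> has_copy V c True G1 \<or> has_copy V c False G2"

primrec builder_wins_within :: "nat set \<Rightarrow> ograph \<Rightarrow> ograph \<Rightarrow> nat \<Rightarrow> colouring \<Rightarrow> bool" where
  "builder_wins_within V G1 G2 0 c = builder_won V G1 G2 c"
| "builder_wins_within V G1 G2 (Suc k) c =
     (builder_won V G1 G2 c \<or>
      (\<exists>u v. u \<in> V \<and> v \<in> V \<and> u < v \<and> c (u,v) = None \<and>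
         (\<forall>b. builder_wins_within V G1 G2 k (c((u,v) := Some b)))))"

definition online_value :: "nat set \<Rightarrow> ograph \<Rightarrow> ograph \<Rightarrow> nat" where
  "online_value V G1 G2 = (LEAST k. builder_wins_within V G1 G2 k (\<lambda>_. None))"

definition r_o :: "ograph \<Rightarrow> ograph \<Rightarrow> nat" where
  "r_o G1 G2 = online_value {1..} G1 G2"

definition r_o_restr :: "ograph \<Rightarrow> ograph \<Rightarrow> nat \<Rightarrow> nat" where
  "r_o_restr G1 G2 N = online_value {1..N} G1 G2"

definition r_ord :: "ograph \<Rightarrow> ograph \<Rightarrow> nat" where
  "r_ord G1 G2 = (LEAST N. \<forall>col :: nat \<Rightarrow> nat \<Rightarrow> bool.
      builder_won {1..N} G1 G2 (\<lambda>(u,v). Some (col u v)))"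

end

theory Submission
  imports Defs
begin

lemma has_copy_mono: "has_copy V c b G \<Longrightarrow> V \<subseteq> W \<Longrightarrow> has_copy W c b G"
  unfolding has_copy_def by blast

lemma won_mono: "builder_won V G1 G2 c \<Longrightarrow> V \<subseteq> W \<Longrightarrow> builder_won W G1 G2 c"
  unfolding builder_won_def using has_copy_mono by blast

lemma wins_mono: "builder_wins_within V G1 G2 k c \<Longrightarrow> V \<subseteq> W \<Longrightarrow> builder_wins_within W G1 G2 k c"
proof (induction k arbitrary: c)
  case 0
  then show ?case using won_mono by simp
next
  case (Suc k)
  then show ?case using won_mono by simp blast
qed

lemma fin_bound: "finite (S::nat set) \<Longrightarrow> S \<subseteq> {1..} \<Longrightarrow> \<exists>M. S \<subseteq> {1..M}"
  by (metis atLeastAtMost_iff atLeast_iff finite_nat_set_iff_bounded_le subset_eq)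

lemma has_copy_fin: "has_copy {1..} c b G \<Longrightarrow> \<exists>M. has_copy {1..M} c b G"
proof -
  assume "has_copy {1..} c b G"
  then obtain f where f: "strict_mono_on {1..fst G} f" "f ` {1..fst G} \<subseteq> {1..}"
      "\<forall>(i,j)\<in>snd G. c (f i, f j) = Some b" unfolding has_copy_def by blast
  obtain M where "f ` {1..fst G} \<subseteq> {1..M}" using fin_bound[OF _ f(2)] by blast
  then show ?thesis using f unfolding has_copy_def by blast
qed

lemma won_fin: "builder_won {1..} G1 G2 c \<Longrightarrow> \<exists>M. builder_won {1..M} G1 G2 c"
  unfolding builder_won_def using has_copy_fin by blast

lemma ivl_sub: "M \<le> M' \<Longrightarrow> {1..M} \<subseteq> {1..(M'::nat)}" by auto

lemma wins_fin: "builder_wins_within {1..} G1 G2 k c \<Longrightarrow> \<exists>M. builder_wins_within {1..M} G1 G2 k c"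
proof (induction k arbitrary: c)
  case 0
  then show ?case using won_fin by simp
next
  case (Suc k)
  show ?case
  proof (cases "builder_won {1..} G1 G2 c")
    case True
    then obtain M where "builder_won {1..M} G1 G2 c" using won_fin by blast
    then show ?thesis by auto
  next
    case False
    then obtain u v where uv: "u \<in> {1..}" "v \<in> {1..}" "u < v" "c (u,v) = None"
      "\<forall>b. builder_wins_within {1..} G1 G2 k (c((u,v) := Some b))" using Suc.prems by auto
    obtain M1 where M1: "builder_wins_within {1..M1} G1 G2 k (c((u,v) := Some True))"
      using Suc.IH uv(5) by blast
    obtain M2 where M2: "builder_wins_within {1..M2} G1 G2 k (c((u,v) := Some False))"
      using Suc.IH uv(5) by blast
    define M where "M = max v (max M1 M2)"
    have "\<forall>b. builder_wins_within {1..M} G1 G2 k (c((u,v) := Some b))"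
    proof
      fix b show "builder_wins_within {1..M} G1 G2 k (c((u,v) := Some b))"
        using wins_mono[OF M1 ivl_sub] wins_mono[OF M2 ivl_sub] unfolding M_def
        by (cases b) auto
    qed
    moreover have "u \<in> {1..M}" "v \<in> {1..M}" using uv unfolding M_def by auto
    ultimately show ?thesis using uv by (simp only: builder_wins_within.simps) blast
  qed
qed

theorem lemma7:
  assumes "ograph G" and "ograph H"
  shows "\<exists>N. r_ord G H \<le> N \<and> r_o G H = r_o_restr G H N"
proof (cases "\<exists>k. builder_wins_within {1..} G H k (\<lambda>_. None)")
  case True
  define k0 where "k0 = r_o G H"
  have k0: "builder_wins_within {1..} G H k0 (\<lambda>_. None)"
    unfolding k0_def r_o_def online_value_def using True by (rule LeastI_ex)
  obtain M where M: "builder_wins_within {1..M} G H k0 (\<lambda>_. None)" using wins_fin[OF k0] by blast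
  define N where "N = max M (r_ord G H)"
  have MN: "builder_wins_within {1..N} G H k0 (\<lambda>_. None)"
    using wins_mono[OF M ivl_sub] unfolding N_def by auto
  have le1: "r_o_restr G H N \<le> k0" unfolding r_o_restr_def online_value_def
    using MN by (rule Least_le)
  have "builder_wins_within {1..N} G H (r_o_restr G H N) (\<lambda>_. None)"
    unfolding r_o_restr_def online_value_def using MN by (rule LeastI)
  hence "builder_wins_within {1..} G H (r_o_restr G H N) (\<lambda>_. None)"
    by (rule wins_mono) auto
  hence "k0 \<le> r_o_restr G H N" unfolding k0_def r_o_def online_value_def by (rule Least_le)
  with le1 show ?thesis unfolding N_def k0_def by (intro exI[of _ "max M (r_ord G H)"]) auto
next
  case False
  have F1: "(\<lambda>k. builder_wins_within {1..} G H k (\<lambda>_. None)) = (\<lambda>k. False)" using False by auto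
  have F2: "(\<lambda>k. builder_wins_within {1..r_ord G H} G H k (\<lambda>_. None)) = (\<lambda>k. False)"
    using False wins_mono[of "{1..r_ord G H}" G H _ _ "{1..}"] by fastforce
  show ?thesis unfolding r_o_def r_o_restr_def online_value_def
    by (intro exI[of _ "r_ord G H"]) (simp only: F1 F2 le_refl refl conj_absorb simp_thms)
qed

end
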